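(* Let $\overline\alpha$ be coherent. Then for every $\mathfrak A\in K_{\overline\alpha}$ with $\delta(\mathfrak A)>0$ there is $\mathfrak D\in K_{\overline\alpha}$ with $\mathfrak A\subseteq\mathfrak D$ and $\delta(\mathfrak D)=0$.
   Context: Fix a finite relational language $L$ in which every relation symbol has arity at least $2$. $K_L$ is the class of all finite $L$-structures (including the empty one) in which every relation symbol is interpreted symmetrically and irreflexively. Fix $\overline\alpha:L\to(0,1]$, writing $\overline\alpha_E=\overline\alpha(E)$, such that it is not the case that all symbols of $L$ are binary and $\overline\alpha_E=1$ for all $E$. For $\mathfrak A\in K_L$ let $N_E(\mathfrak A)$ be the number of subsets of $A$ on which $E$ holds and $\delta(\mathfrak A)=|A|-\sum_{E}\overline\alpha_E N_E(\mathfrak A)$. $K_{\overline\alpha}=\{\mathfrak A\in K_L:\delta(\mathfrak A')\ge0\text{ for all substructures }\mathfrak A'\subseteq\mathfrak A\}$. $\overline\alpha$ is coherent if there are positive integers $m_E$ ($E\in L$) with $\sum_{E}m_E\overline\alpha_E\in\mathbb Q$. *)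

theory Defs
  imports Complex_Main
begin

text \<open>A symmetric irreflexive relation of arity k on a universe A is represented by the set
  of k-element subsets of A on which it holds.\<close>

type_synonym ('a, 'l) struc = "'a set \<times> ('l \<Rightarrow> 'a set set)"

definition in_KL :: "('l \<Rightarrow> nat) \<Rightarrow> ('a, 'l) struc \<Rightarrow> bool" where
  "in_KL ar M \<longleftrightarrow> finite (fst M) \<and> (\<forall>E. snd M E \<subseteq> {S. S \<subseteq> fst M \<and> card S = ar E})"

definition substr :: "('a, 'l) struc \<Rightarrow> ('a, 'l) struc \<Rightarrow> bool" where
  "substr M N \<longleftrightarrow> fst M \<subseteq> fst N \<and> (\<forall>E. snd M E = {S \<in> snd N E. S \<subseteq> fst M})"

definition delta :: "('l::finite \<Rightarrow> real) \<Rightarrow> ('a, 'l) struc \<Rightarrow> real" where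
  "delta \<alpha> M = real (card (fst M)) - (\<Sum>E\<in>UNIV. \<alpha> E * real (card (snd M E)))"

definition K_alpha :: "('l \<Rightarrow> nat) \<Rightarrow> ('l::finite \<Rightarrow> real) \<Rightarrow> ('a, 'l) struc \<Rightarrow> bool" where
  "K_alpha ar \<alpha> M \<longleftrightarrow> in_KL ar M \<and> (\<forall>M'. substr M' M \<longrightarrow> delta \<alpha> M' \<ge> 0)"

definition coherent :: "('l::finite \<Rightarrow> real) \<Rightarrow> bool" where
  "coherent \<alpha> \<longleftrightarrow> (\<exists>m::'l \<Rightarrow> nat. (\<forall>E. m E > 0) \<and> (\<Sum>E\<in>UNIV. real (m E) * \<alpha> E) \<in> \<rat>)"

end

theory Submission
  imports Defs "HOL-Library.Multiset"
begin


definition clampv :: "real \<Rightarrow> real \<Rightarrow> real \<Rightarrow> real" where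
  "clampv s t y = max s (min y t)"
definition ov :: "real \<Rightarrow> real \<Rightarrow> real \<Rightarrow> real \<Rightarrow> real" where
  "ov s t c d = max 0 (min t d - max s c)"

lemma ov_clamp1: "s \<le> t \<Longrightarrow> c \<le> d \<Longrightarrow> ov s t c d = clampv s t d - clampv s t c"
  unfolding ov_def clampv_def by (auto simp: min_def max_def)
lemma ov_clamp2: "s \<le> t \<Longrightarrow> c \<le> d \<Longrightarrow> ov s t c d = clampv c d t - clampv c d s"
  unfolding ov_def clampv_def by (auto simp: min_def max_def)
lemma ov_nonneg: "0 \<le> ov s t c d" unfolding ov_def by simp
lemma ov_pos: "ov s t c d > 0 \<Longrightarrow> c < t \<and> s < d"
  unfolding ov_def by (auto simp: min_def max_def split: if_splits)

lemma sum_group_card: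
  fixes f :: "'l::finite \<Rightarrow> real" and h :: "nat \<Rightarrow> 'l"
  assumes "finite J"
  shows "(\<Sum>j\<in>J. f (h j)) = (\<Sum>E\<in>UNIV. f E * real (card {j\<in>J. h j = E}))"
proof -
  have "(\<Sum>j\<in>J. f (h j)) = (\<Sum>j\<in>J. \<Sum>E\<in>UNIV. if h j = E then f E else 0)"
    by simp
  also have "\<dots> = (\<Sum>E\<in>UNIV. \<Sum>j\<in>J. if h j = E then f E else 0)"
    by (rule sum.swap)
  also have "\<dots> = (\<Sum>E\<in>UNIV. f E * real (card {j\<in>J. h j = E}))"
    using assms by (simp add: sum.If_cases Int_def mult.commute)
  finally show ?thesis .
qed



locale gad =
  fixes \<alpha> :: "'l::finite \<Rightarrow> real" and ar :: "'l \<Rightarrow> nat" and L :: "'l list"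
    and \<epsilon> :: real and N R A0 :: nat
  assumes apos: "\<forall>E. 0 < \<alpha> E \<and> \<alpha> E \<le> 1"
    and ar2: "\<forall>E. 2 \<le> ar E \<and> ar E \<le> A0"
    and eps: "0 < \<epsilon>" "\<epsilon> \<le> 1"
    and Rb: "\<forall>E. 1 \<le> real R * \<alpha> E"
    and tot: "(\<Sum>j<length L. \<alpha> (L!j)) = real N + \<epsilon>"
    and big: "2 * (R + A0 + 1) < N + 1"
begin

definition "w j = \<alpha> (L!j)"
definition "C j = 1 - \<epsilon> + (\<Sum>i<j. w i)"
definition "pp j = nat \<lfloor>C j\<rfloor>"
definition "rk j = card {j'. j < j' \<and> j' < length L \<and> L!j' = L!j \<and> pp j' = pp j}"
definition "edge j = insert (pp j) ((\<lambda>i. (pp j + 1 + rk j + i) mod (N+1)) ` {..< ar (L!j) - 1})"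
definition "xx j i = ov (C j) (C (Suc j)) (real i) (real i + 1)"

lemma w_pos: "0 < w j" using apos by (simp add: w_def)
lemma w_le1: "w j \<le> 1" using apos by (simp add: w_def)
lemma w_ge: "1 \<le> real R * w j" using Rb by (simp add: w_def)
lemma R_pos: "0 < R" using w_ge[of 0] by (cases R) auto

lemma C_Suc: "C (Suc j) = C j + w j" by (simp add: C_def)
lemma C_mono: "j \<le> j' \<Longrightarrow> C j \<le> C j'"
proof (induction j' rule: dec_induct)
  case (step n) then show ?case using C_Suc[of n] w_pos[of n] by simp
qed simp
lemma C_0: "C 0 = 1 - \<epsilon>" by (simp add: C_def)
lemma C_ne: "C (length L) = real N + 1" using tot by (simp add: C_def w_def)
lemma C_nonneg: "0 \<le> C j" using C_mono[of 0 j] C_0 eps by simp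
lemma C_lt: "j < length L \<Longrightarrow> C j < real N + 1"
  using C_mono[of "Suc j" "length L"] C_Suc[of j] w_pos[of j] C_ne by simp
lemma C_diff: "j \<le> j' \<Longrightarrow> real (j' - j) \<le> real R * (C j' - C j)"
proof (induction j' rule: dec_induct)
  case (step n)
  have "real (Suc n - j) = real (n - j) + 1" using step.hyps by simp
  also have "\<dots> \<le> real R * (C n - C j) + real R * w n" using step.IH w_ge[of n] by simp
  also have "\<dots> = real R * (C (Suc n) - C j)" by (simp add: C_Suc algebra_simps)
  finally show ?case .
qed simp

lemma pp_props: "real (pp j) \<le> C j" "C j < real (pp j) + 1"
  using C_nonneg[of j] unfolding pp_def by linarith+
lemma pp_le: "j < length L \<Longrightarrow> pp j \<le> N"
  using pp_props(1)[of j] C_lt[of j] by linarith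

lemma rk_bound: "rk j \<le> R"
proof -
  have "{j'. j < j' \<and> j' < length L \<and> L!j' = L!j \<and> pp j' = pp j} \<subseteq> {j<..<j+R}"
  proof
    fix j' assume "j' \<in> {j'. j < j' \<and> j' < length L \<and> L!j' = L!j \<and> pp j' = pp j}"
    then have h: "j < j'" "pp j' = pp j" by auto
    have "C j' < C j + 1" using pp_props[of j'] pp_props[of j] h by simp
    moreover have "real (j' - j) \<le> real R * (C j' - C j)" using C_diff h by simp
    moreover have "real R * (C j' - C j) < real R * 1"
      using R_pos \<open>C j' < C j + 1\<close> by (intro mult_strict_left_mono) auto
    ultimately have "real (j' - j) < real R" by simp
    then show "j' \<in> {j<..<j+R}" using h by simp
  qed
  then have "rk j \<le> card {j<..<j+R}" unfolding rk_def by (rule card_mono[rotated]) simp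
  then show ?thesis by simp
qed

lemma modeq_nat: "x mod M = y mod M \<Longrightarrow> x < y + M \<Longrightarrow> y < x + M \<Longrightarrow> x = (y::nat)"
proof -
  assume a: "x mod M = y mod M" "x < y + M" "y < x + M"
  show "x = y"
  proof (cases "y \<le> x")
    case True
    then have "M dvd x - y" using a(1) mod_eq_dvd_iff_nat by blast
    moreover have "x - y < M" using a(2) True by simp
    ultimately show ?thesis using True by (metis diff_is_0_eq dvd_imp_le le_antisym not_le neq0_conv)
  next
    case False
    then have "M dvd y - x" using a(1) mod_eq_dvd_iff_nat[of x y M] by simp
    moreover have "y - x < M" using a(3) False by simp
    ultimately show ?thesis using False by (metis diff_is_0_eq dvd_imp_le not_le neq0_conv)
  qed
qed

lemma ar_ge: "2 \<le> ar (L!j)" "ar (L!j) \<le> A0" using ar2 by auto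

lemma win_in: "i < ar (L!j) - 1 \<Longrightarrow> 1 + rk j + i < N + 1"
proof -
  assume "i < ar (L!j) - 1"
  then have "i < A0" using ar_ge(2)[of j] by simp
  moreover have "2*R + 2*A0 + 2 < N + 1" using big by simp
  ultimately show ?thesis using rk_bound[of j] by linarith
qed

lemma pp_lt: "j < length L \<Longrightarrow> pp j < N + 1" using pp_le by force

lemma edge_sub: "j < length L \<Longrightarrow> edge j \<subseteq> {0..N}"
  unfolding edge_def using pp_le[of j] by (auto simp: less_Suc_eq_le[symmetric])

lemma edge_card: "j < length L \<Longrightarrow> card (edge j) = ar (L!j)"
proof -
  assume j: "j < length L"
  let ?f = "\<lambda>i. (pp j + 1 + rk j + i) mod (N+1)"
  have inj: "inj_on ?f {..< ar (L!j) - 1}"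
  proof (rule inj_onI)
    fix i i' assume a: "i \<in> {..< ar (L!j) - 1}" "i' \<in> {..< ar (L!j) - 1}" "?f i = ?f i'"
    have b: "1 + rk j + i < N + 1" "1 + rk j + i' < N + 1" using a(1,2) win_in by auto
    have "pp j + 1 + rk j + i = pp j + 1 + rk j + i'"
      by (rule modeq_nat[OF a(3)]) (use b in linarith)+
    then show "i = i'" by simp
  qed
  have nin: "pp j \<notin> ?f ` {..< ar (L!j) - 1}"
  proof
    assume "pp j \<in> ?f ` {..< ar (L!j) - 1}"
    then obtain i where i: "i < ar (L!j) - 1" "pp j = ?f i" by auto
    have "pp j mod (N+1) = pp j" using pp_lt[OF j] by simp
    then have e: "(pp j + 1 + rk j + i) mod (N+1) = pp j mod (N+1)" using i(2) by simp
    have b: "1 + rk j + i < N + 1" using i(1) win_in by auto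
    have "pp j + 1 + rk j + i = pp j"
      by (rule modeq_nat[OF e]) (use b in linarith)+
    then show False by simp
  qed
  have "card (edge j) = Suc (card (?f ` {..< ar (L!j) - 1}))"
    unfolding edge_def using nin by simp
  also have "\<dots> = ar (L!j)" using card_image[OF inj] ar_ge[of j] by simp
  finally show ?thesis .
qed

lemma edge_nz: "j < length L \<Longrightarrow> \<exists>i\<in>edge j. i \<noteq> 0"
proof (rule ccontr)
  assume j: "j < length L" and n: "\<not> (\<exists>i\<in>edge j. i \<noteq> 0)"
  then have "edge j \<subseteq> {0}" by auto
  then have "card (edge j) \<le> card {0::nat}" by (intro card_mono) auto
  then show False using edge_card[OF j] ar_ge[of j] by simp
qed

lemma rk_lt: "j < j' \<Longrightarrow> j' < length L \<Longrightarrow> L!j = L!j' \<Longrightarrow> pp j = pp j' \<Longrightarrow> rk j' < rk j"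
proof -
  assume h: "j < j'" "j' < length L" "L!j = L!j'" "pp j = pp j'"
  let ?S = "\<lambda>j. {j'. j < j' \<and> j' < length L \<and> L!j' = L!j \<and> pp j' = pp j}"
  have "insert j' (?S j') \<subseteq> ?S j" using h by auto
  moreover have "j' \<notin> ?S j'" by simp
  moreover have "finite (?S j)" by (rule finite_subset[of _ "{..<length L}"]) auto
  ultimately have "card (insert j' (?S j')) \<le> card (?S j)" by (intro card_mono)
  moreover have "card (insert j' (?S j')) = Suc (card (?S j'))"
    using \<open>j' \<notin> ?S j'\<close> by (intro card_insert_disjoint) (auto intro: finite_subset[of _ "{..<length L}"])
  ultimately show ?thesis unfolding rk_def by simp
qed

lemma win_le: "j < length L \<Longrightarrow> j' < length L \<Longrightarrow> pp j = pp j' \<Longrightarrow> edge j \<subseteq> edge j' \<Longrightarrow> rk j' \<le> rk j"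
proof -
  assume h: "j < length L" "j' < length L" "pp j = pp j'" "edge j \<subseteq> edge j'"
  have "(pp j + 1 + rk j + 0) mod (N+1) \<in> edge j" unfolding edge_def using ar_ge[of j]
    by (intro insertI2 image_eqI[where x=0]) auto
  then have "(pp j + 1 + rk j + 0) mod (N+1) \<in> edge j'" using h by auto
  then consider "(pp j + 1 + rk j + 0) mod (N+1) = pp j'"
    | i where "i < ar (L!j') - 1" "(pp j + 1 + rk j + 0) mod (N+1) = (pp j' + 1 + rk j' + i) mod (N+1)"
    unfolding edge_def by auto
  then show ?thesis
  proof cases
    case 1
    have "pp j' mod (N+1) = pp j'" using pp_lt[OF h(2)] by simp
    then have e: "(pp j + 1 + rk j + 0) mod (N+1) = pp j' mod (N+1)" using 1 by simp
    have b: "1 + rk j + 0 < N + 1" using ar_ge[of j] win_in[of 0 j] by simp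
    have "pp j + 1 + rk j + 0 = pp j'"
      by (rule modeq_nat[OF e]) (use b h(3) in linarith)+
    then show ?thesis using h(3) by simp
  next
    case 2
    have b: "1 + rk j + 0 < N + 1" using ar_ge[of j] win_in[of 0 j] by simp
    have b': "1 + rk j' + i < N + 1" using 2(1) win_in[of i j'] by simp
    have "pp j + 1 + rk j + 0 = pp j' + 1 + rk j' + i"
      by (rule modeq_nat[OF 2(2)]) (use b b' h(3) in linarith)+
    then show ?thesis using h(3) by simp
  qed
qed

lemma edge_inj: "j < length L \<Longrightarrow> j' < length L \<Longrightarrow> L!j = L!j' \<Longrightarrow> edge j = edge j' \<Longrightarrow> j = j'"
proof (rule ccontr)
  assume h: "j < length L" "j' < length L" "L!j = L!j'" "edge j = edge j'" "j \<noteq> j'"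
  show False
  proof (cases "pp j = pp j'")
    case True
    have "rk j = rk j'" using win_le[OF h(1,2) True] win_le[OF h(2,1) True[symmetric]] h(4) by simp
    moreover have "rk j' < rk j \<or> rk j < rk j'"
      using h True rk_lt[of j j'] rk_lt[of j' j] by (cases "j < j'") auto
    ultimately show False by simp
  next
    case False
    have "pp j' \<in> edge j" using h(4) unfolding edge_def by auto
    then obtain i where i: "i < ar (L!j) - 1" "pp j' = (pp j + 1 + rk j + i) mod (N+1)"
      using False unfolding edge_def by auto
    have "pp j \<in> edge j" unfolding edge_def by simp
    then have "pp j \<in> edge j'" using h(4) by simp
    then obtain i' where i': "i' < ar (L!j') - 1" "pp j = (pp j' + 1 + rk j' + i') mod (N+1)"
      using False unfolding edge_def by auto
    define d where "d = 1 + rk j + i"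
    define d' where "d' = 1 + rk j' + i'"
    have "pp j = ((pp j + d) mod (N+1) + d') mod (N+1)" using i i' by (simp add: d_def d'_def add.assoc)
    also have "\<dots> = (pp j + (d + d')) mod (N+1)" by (simp add: mod_add_left_eq add.assoc)
    finally have e: "(pp j + (d + d')) mod (N+1) = pp j mod (N+1)" using pp_lt[OF h(1)] by simp
    then have "(N+1) dvd (pp j + (d + d')) - pp j" using mod_eq_dvd_iff_nat[of "pp j" "pp j + (d+d')"] by simp
    then have dv: "(N+1) dvd (d + d')" by simp
    have lt: "d + d' < N + 1"
    proof -
      have "i < A0" using i(1) ar_ge(2)[of j] by simp
      moreover have "i' < A0" using i'(1) ar_ge(2)[of j'] by simp
      moreover have "2*R + 2*A0 + 2 < N + 1" using big by simp
      ultimately show ?thesis using rk_bound[of j] rk_bound[of j'] unfolding d_def d'_def by linarith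
    qed
    have ps: "0 < d + d'" by (simp add: d_def)
    have "N + 1 \<le> d + d'" by (rule dvd_imp_le[OF dv ps])
    with lt show False by linarith
  qed
qed

lemma xx_nonneg: "0 \<le> xx j i" unfolding xx_def by (rule ov_nonneg)

lemma C_Suc_le: "j < length L \<Longrightarrow> C (Suc j) \<le> real N + 1"
  using C_mono[of "Suc j" "length L"] C_ne by simp

lemma xx_sum_i: "j < length L \<Longrightarrow> (\<Sum>i<N+1. xx j i) = w j"
proof -
  assume j: "j < length L"
  let ?f = "\<lambda>n::nat. clampv (C j) (C (Suc j)) (real n)"
  have le: "C j \<le> C (Suc j)" using C_mono by simp
  have "(\<Sum>i<N+1. xx j i) = (\<Sum>i<N+1. ?f (Suc i) - ?f i)"
    unfolding xx_def using le by (intro sum.cong refl) (simp add: ov_clamp1 add.commute)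
  also have "\<dots> = ?f (N+1) - ?f 0" by (rule sum_lessThan_telescope)
  also have "\<dots> = C (Suc j) - C j"
    using C_nonneg[of j] C_Suc_le[OF j] le unfolding clampv_def by simp
  finally show ?thesis by (simp add: C_Suc)
qed

lemma xx_sum_j: "i \<le> N \<Longrightarrow> (\<Sum>j<length L. xx j i) = (if i = 0 then \<epsilon> else 1)"
proof -
  assume i: "i \<le> N"
  let ?g = "\<lambda>n::nat. clampv (real i) (real i + 1) (C n)"
  have "(\<Sum>j<length L. xx j i) = (\<Sum>j<length L. ?g (Suc j) - ?g j)"
    unfolding xx_def using C_mono by (intro sum.cong refl) (simp add: ov_clamp2)
  also have "\<dots> = ?g (length L) - ?g 0" by (rule sum_lessThan_telescope)
  also have "\<dots> = (if i = 0 then \<epsilon> else 1)"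
    using C_ne C_0 i eps unfolding clampv_def by auto
  finally show ?thesis .
qed

lemma xx_mem: "j < length L \<Longrightarrow> i \<le> N \<Longrightarrow> 0 < xx j i \<Longrightarrow> i \<in> edge j"
proof -
  assume j: "j < length L" and i: "i \<le> N" and p: "0 < xx j i"
  have a: "real i < C (Suc j)" "C j < real i + 1" using ov_pos[OF p[unfolded xx_def]] by auto
  have b: "C (Suc j) \<le> C j + 1" using C_Suc[of j] w_le1[of j] by simp
  have "pp j \<le> i" using a(2) pp_props[of j] by linarith
  moreover have "i \<le> pp j + 1" using a(1) b pp_props[of j] by linarith
  ultimately consider "i = pp j" | "i = pp j + 1" by linarith
  then show ?thesis
  proof cases
    case 1 then show ?thesis unfolding edge_def by simp
  next
    case 2
    have "{j'. j < j' \<and> j' < length L \<and> L!j' = L!j \<and> pp j' = pp j} = {}"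
    proof (intro equalityI subsetI)
      fix j' assume "j' \<in> {j'. j < j' \<and> j' < length L \<and> L!j' = L!j \<and> pp j' = pp j}"
      then have h: "j < j'" "pp j' = pp j" by auto
      have "C (Suc j) \<le> C j'" using h(1) C_mono by simp
      then have "real (pp j) + 1 < C j'" using a(1) 2 by simp
      then have "pp j + 1 \<le> pp j'" unfolding pp_def[of j'] by linarith
      then show "j' \<in> {}" using h(2) by simp
    qed auto
    then have "rk j = 0" unfolding rk_def by simp
    then have "(pp j + 1 + rk j + 0) mod (N+1) \<in> edge j" unfolding edge_def using ar_ge[of j]
      by (intro insertI2 image_eqI[where x=0]) auto
    moreover have "(pp j + 1 + rk j + 0) mod (N+1) = i" using \<open>rk j = 0\<close> 2 i by simp
    ultimately show ?thesis by simp
  qed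
qed

definition "GG E = edge ` {j. j < length L \<and> L!j = E}"

lemma GG_card_gen: "card {g \<in> GG E. g \<subseteq> Z} = card {j. j < length L \<and> L!j = E \<and> edge j \<subseteq> Z}"
proof -
  have "{g \<in> GG E. g \<subseteq> Z} = edge ` {j. j < length L \<and> L!j = E \<and> edge j \<subseteq> Z}"
    unfolding GG_def by auto
  moreover have "inj_on edge {j. j < length L \<and> L!j = E \<and> edge j \<subseteq> Z}"
    by (rule inj_onI) (auto intro: edge_inj)
  ultimately show ?thesis by (simp add: card_image)
qed

lemma GG_load:
  assumes Z: "Z \<subseteq> {0..N}"
  shows "(\<Sum>E\<in>UNIV. \<alpha> E * real (card {g \<in> GG E. g \<subseteq> Z})) \<le> real (card (Z - {0})) + (if 0 \<in> Z then \<epsilon> else 0)"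
proof -
  define J where "J = {j. j < length L \<and> edge j \<subseteq> Z}"
  have fJ: "finite J" unfolding J_def by auto
  have "(\<Sum>E\<in>UNIV. \<alpha> E * real (card {g \<in> GG E. g \<subseteq> Z})) = (\<Sum>E\<in>UNIV. \<alpha> E * real (card {j\<in>J. L!j = E}))"
    unfolding GG_card_gen J_def by (intro sum.cong refl) (metis (mono_tags, lifting) Collect_cong mem_Collect_eq)
  also have "\<dots> = (\<Sum>j\<in>J. \<alpha> (L!j))" using sum_group_card[OF fJ, of \<alpha> "(!) L"] by simp
  also have "\<dots> = (\<Sum>j\<in>J. \<Sum>i<N+1. xx j i)"
  proof (intro sum.cong refl)
    fix j assume "j \<in> J"
    then have "j < length L" unfolding J_def by simp
    then show "\<alpha> (L!j) = (\<Sum>i<N+1. xx j i)" using xx_sum_i[of j] unfolding w_def by argo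
  qed
  also have "\<dots> = (\<Sum>j\<in>J. \<Sum>i\<in>Z. xx j i)"
  proof (rule sum.cong[OF refl])
    fix j assume j: "j \<in> J"
    have f: "finite {..<N+1}" by simp
    have s: "Z \<subseteq> {..<N+1}" using Z by auto
    have "\<forall>i\<in>{..<N + 1} - Z. xx j i = 0"
    proof
      fix i assume i: "i \<in> {..<N + 1} - Z"
      show "xx j i = 0"
      proof (rule ccontr)
        assume "xx j i \<noteq> 0"
        then have "0 < xx j i" using xx_nonneg[of j i] by simp
        then have "i \<in> edge j" using xx_mem[of j i] j i unfolding J_def by auto
        then show False using j i unfolding J_def by auto
      qed
    qed
    then show "(\<Sum>i<N+1. xx j i) = (\<Sum>i\<in>Z. xx j i)" by (intro sum.mono_neutral_right[OF f s]) 
  qed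
  also have "\<dots> = (\<Sum>i\<in>Z. \<Sum>j\<in>J. xx j i)" by (rule sum.swap)
  also have "\<dots> \<le> (\<Sum>i\<in>Z. \<Sum>j<length L. xx j i)"
    by (intro sum_mono sum_mono2) (auto simp: J_def xx_nonneg)
  also have "\<dots> = (\<Sum>i\<in>Z. if i = 0 then \<epsilon> else 1)"
    using Z by (intro sum.cong refl xx_sum_j) auto
  also have "\<dots> = real (card (Z - {0})) + (if 0 \<in> Z then \<epsilon> else 0)"
  proof -
    have fZ: "finite Z" using Z finite_subset by blast
    show ?thesis
    proof (cases "0 \<in> Z")
      case True
      then have "Z = insert 0 (Z - {0})" by auto
      then have "(\<Sum>i\<in>Z. if i = 0 then \<epsilon> else 1) = (\<Sum>i\<in>insert 0 (Z - {0}). if i = 0 then \<epsilon> else 1)" by simp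
      also have "\<dots> = \<epsilon> + (\<Sum>i\<in>Z - {0}. if i = 0 then \<epsilon> else 1)" using fZ by (subst sum.insert) auto
      also have "(\<Sum>i\<in>Z - {0}. if i = 0 then \<epsilon> else 1) = (\<Sum>i\<in>Z - {0}. 1)" by (intro sum.cong) auto
      finally show ?thesis using True by simp
    next
      case False
      then have "(\<Sum>i\<in>Z. if i = 0 then \<epsilon> else 1) = (\<Sum>i\<in>Z. 1)" by (intro sum.cong) auto
      then show ?thesis using False by simp
    qed
  qed
  finally show ?thesis .
qed

lemma GG_props: "card (GG E) = card {j. j < length L \<and> L!j = E}"
  "g \<in> GG E \<Longrightarrow> g \<subseteq> {0..N} \<and> card g = ar E \<and> (\<exists>i\<in>g. i \<noteq> 0)"
proof -
  show "card (GG E) = card {j. j < length L \<and> L!j = E}"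
    unfolding GG_def by (rule card_image, rule inj_onI) (auto intro: edge_inj)
  assume "g \<in> GG E"
  then obtain j where "j < length L" "L!j = E" "g = edge j" unfolding GG_def by auto
  then show "g \<subseteq> {0..N} \<and> card g = ar E \<and> (\<exists>i\<in>g. i \<noteq> 0)"
    using edge_sub edge_card edge_nz by auto
qed

end

lemma gadget:
  fixes \<alpha> :: "'l::finite \<Rightarrow> real" and ar :: "'l \<Rightarrow> nat" and c :: "'l \<Rightarrow> nat"
    and \<epsilon> :: real and N R A0 :: nat
  assumes apos: "\<forall>E. 0 < \<alpha> E \<and> \<alpha> E \<le> 1"
    and ar2: "\<forall>E. 2 \<le> ar E \<and> ar E \<le> A0"
    and eps: "0 < \<epsilon>" "\<epsilon> \<le> 1"
    and Rb: "\<forall>E. 1 \<le> real R * \<alpha> E"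
    and tot: "(\<Sum>E\<in>UNIV. \<alpha> E * real (c E)) = real N + \<epsilon>"
    and big: "2 * (R + A0 + 1) < N + 1"
  shows "\<exists>G::'l \<Rightarrow> nat set set. (\<forall>E. card (G E) = c E) \<and>
     (\<forall>E. \<forall>g\<in>G E. g \<subseteq> {0..N} \<and> card g = ar E \<and> (\<exists>i\<in>g. i \<noteq> 0)) \<and>
     (\<forall>Z \<subseteq> {0..N}. (\<Sum>E\<in>UNIV. \<alpha> E * real (card {g \<in> G E. g \<subseteq> Z})) \<le> real (card (Z - {0})) + (if 0 \<in> Z then \<epsilon> else 0))"
proof -
  obtain L where L: "mset L = (\<Sum>E\<in>UNIV. replicate_mset (c E) E)" using ex_mset by blast
  have cnt: "card {j. j < length L \<and> L!j = E} = c E" for E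
  proof -
    have "count (mset L) E = c E" unfolding L count_sum by (simp add: count_replicate_mset)
    moreover have "count_list xs E = length (filter ((=) E) xs)" for xs by (induction xs) auto
    ultimately have "length (filter ((=) E) L) = c E" by (simp add: count_mset)
    then show ?thesis by (simp add: length_filter_conv_card eq_commute)
  qed
  have tL: "(\<Sum>j<length L. \<alpha> (L!j)) = real N + \<epsilon>"
    using sum_group_card[of "{..<length L}" \<alpha> "(!) L"] tot cnt by (simp add: lessThan_def)
  interpret gad \<alpha> ar L \<epsilon> N R A0 using apos ar2 eps Rb tL big by unfold_locales
  show ?thesis using GG_props GG_load cnt by (intro exI[of _ GG]) auto
qed



definition dl :: "('l::finite \<Rightarrow> real) \<Rightarrow> ('a, 'l) struc \<Rightarrow> 'a set \<Rightarrow> real" where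
  "dl \<alpha> M X = real (card X) - (\<Sum>E\<in>UNIV. \<alpha> E * real (card {s \<in> snd M E. s \<subseteq> X}))"

lemma K_alpha_iff: "K_alpha ar \<alpha> M \<longleftrightarrow> in_KL ar M \<and> (\<forall>X \<subseteq> fst M. dl \<alpha> M X \<ge> 0)"
proof
  assume K: "K_alpha ar \<alpha> M"
  show "in_KL ar M \<and> (\<forall>X \<subseteq> fst M. dl \<alpha> M X \<ge> 0)"
  proof (intro conjI allI impI)
    show "in_KL ar M" using K unfolding K_alpha_def by simp
    fix X assume X: "X \<subseteq> fst M"
    have "substr (X, \<lambda>E. {s \<in> snd M E. s \<subseteq> X}) M" unfolding substr_def using X by simp
    then have "delta \<alpha> (X, \<lambda>E. {s \<in> snd M E. s \<subseteq> X}) \<ge> 0" using K unfolding K_alpha_def by blast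
    then show "dl \<alpha> M X \<ge> 0" unfolding delta_def dl_def by simp
  qed
next
  assume h: "in_KL ar M \<and> (\<forall>X \<subseteq> fst M. dl \<alpha> M X \<ge> 0)"
  show "K_alpha ar \<alpha> M" unfolding K_alpha_def
  proof (intro conjI allI impI)
    show "in_KL ar M" using h by simp
    fix M' assume s: "substr M' M"
    then have "fst M' \<subseteq> fst M" "\<And>E. snd M' E = {s \<in> snd M E. s \<subseteq> fst M'}" unfolding substr_def by auto
    then show "delta \<alpha> M' \<ge> 0" using h unfolding delta_def dl_def by auto
  qed
qed

lemma delta_dl: "in_KL ar M \<Longrightarrow> delta \<alpha> M = dl \<alpha> M (fst M)"
proof -
  assume "in_KL ar M"
  then have "\<And>E. {s \<in> snd M E. s \<subseteq> fst M} = snd M E" unfolding in_KL_def by auto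
  then show ?thesis unfolding delta_def dl_def by simp
qed

lemma dl_sub: "substr D D' \<Longrightarrow> X \<subseteq> fst D \<Longrightarrow> dl \<alpha> D' X = dl \<alpha> D X"
proof -
  assume s: "substr D D'" and X: "X \<subseteq> fst D"
  have "\<And>E. {s \<in> snd D' E. s \<subseteq> X} = {s \<in> snd D E. s \<subseteq> X}" using s X unfolding substr_def by auto
  then show ?thesis unfolding dl_def by simp
qed

lemma substr_refl: "in_KL ar D \<Longrightarrow> substr D D"
  unfolding substr_def in_KL_def by auto

lemma substr_trans: "substr A B \<Longrightarrow> substr B C \<Longrightarrow> substr A C"
  unfolding substr_def by auto

lemma submod:
  assumes K: "in_KL ar D" and X: "X \<subseteq> fst D" and Y: "Y \<subseteq> fst D" and a: "\<forall>E. 0 \<le> \<alpha> E"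
  shows "dl \<alpha> D (X \<union> Y) + dl \<alpha> D (X \<inter> Y) \<le> dl \<alpha> D X + dl \<alpha> D Y"
proof -
  have fD: "finite (fst D)" using K unfolding in_KL_def by simp
  have c1: "card (X \<union> Y) + card (X \<inter> Y) = card X + card Y"
    using card_Un_Int[of X Y] finite_subset[OF X fD] finite_subset[OF Y fD] by simp
  have c2: "real (card {s \<in> snd D E. s \<subseteq> X}) + real (card {s \<in> snd D E. s \<subseteq> Y})
     \<le> real (card {s \<in> snd D E. s \<subseteq> X \<union> Y}) + real (card {s \<in> snd D E. s \<subseteq> X \<inter> Y})" for E
  proof -
    let ?e = "\<lambda>X. {s \<in> snd D E. s \<subseteq> X}"
    have "snd D E \<subseteq> Pow (fst D)" using K unfolding in_KL_def by auto
    then have fin: "finite (snd D E)" using fD by (auto intro: finite_subset)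
    have "card (?e X) + card (?e Y) = card (?e X \<union> ?e Y) + card (?e X \<inter> ?e Y)"
      using card_Un_Int[of "?e X" "?e Y"] fin by simp
    also have "?e X \<inter> ?e Y = ?e (X \<inter> Y)" by auto
    also have "card (?e X \<union> ?e Y) \<le> card (?e (X \<union> Y))" using fin by (intro card_mono) auto
    finally show ?thesis by (simp only: of_nat_add[symmetric] of_nat_le_iff)
  qed
  have "(\<Sum>E\<in>UNIV. \<alpha> E * real (card {s \<in> snd D E. s \<subseteq> X})) + (\<Sum>E\<in>UNIV. \<alpha> E * real (card {s \<in> snd D E. s \<subseteq> Y}))
     \<le> (\<Sum>E\<in>UNIV. \<alpha> E * real (card {s \<in> snd D E. s \<subseteq> X \<union> Y})) + (\<Sum>E\<in>UNIV. \<alpha> E * real (card {s \<in> snd D E. s \<subseteq> X \<inter> Y}))"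
    unfolding sum.distrib[symmetric] distrib_left[symmetric]
    using c2 a by (intro sum_mono mult_left_mono) auto
  then show ?thesis unfolding dl_def using c1
    by (simp add: of_nat_add[symmetric] del: of_nat_add)
qed

lemma zero_cover:
  assumes K: "K_alpha ar \<alpha> D" and a: "\<forall>E. 0 \<le> \<alpha> E" and ar1: "\<forall>E. 1 \<le> ar E"
    and cov: "\<forall>v\<in>fst D. \<exists>X \<subseteq> fst D. v \<in> X \<and> dl \<alpha> D X = 0"
  shows "dl \<alpha> D (fst D) = 0"
proof -
  have KL: "in_KL ar D" and nn: "\<And>X. X \<subseteq> fst D \<Longrightarrow> dl \<alpha> D X \<ge> 0" using K unfolding K_alpha_iff by auto
  have fD: "finite (fst D)" using KL unfolding in_KL_def by simp
  have "\<exists>Z \<subseteq> fst D. T \<subseteq> Z \<and> dl \<alpha> D Z = 0" if "T \<subseteq> fst D" for T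
    using finite_subset[OF that fD] that
  proof (induction T rule: finite_induct)
    case empty
    have e: "{s \<in> snd D E. s \<subseteq> {}} = {}" for E
    proof -
      have "{} \<notin> snd D E" using KL ar1 unfolding in_KL_def by (metis (mono_tags, lifting) card.empty mem_Collect_eq not_one_le_zero subsetD)
      then show ?thesis by auto
    qed
    have "dl \<alpha> D {} = 0" unfolding dl_def e by simp
    then show ?case by blast
  next
    case (insert v T)
    then obtain Z where Z: "Z \<subseteq> fst D" "T \<subseteq> Z" "dl \<alpha> D Z = 0" by auto
    obtain X where X: "X \<subseteq> fst D" "v \<in> X" "dl \<alpha> D X = 0" using cov insert.prems by auto
    have "dl \<alpha> D (Z \<union> X) + dl \<alpha> D (Z \<inter> X) \<le> 0" using submod[OF KL Z(1) X(1) a] Z X by simp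
    moreover have "dl \<alpha> D (Z \<union> X) \<ge> 0" "dl \<alpha> D (Z \<inter> X) \<ge> 0" using nn[of "Z \<union> X"] nn[of "Z \<inter> X"] Z(1) X(1) by auto
    ultimately have "dl \<alpha> D (Z \<union> X) = 0" by linarith
    then show ?case using Z X by (intro exI[of _ "Z \<union> X"]) auto
  qed
  then obtain Z where "Z \<subseteq> fst D" "fst D \<subseteq> Z" "dl \<alpha> D Z = 0" by blast
  then show ?thesis by (metis subset_antisym)
qed



lemma step:
  fixes ar :: "'l::finite \<Rightarrow> nat" and \<alpha> :: "'l \<Rightarrow> real" and D :: "(nat, 'l) struc"
  assumes ar2: "\<forall>E. ar E \<ge> 2" and apos: "\<forall>E. 0 < \<alpha> E \<and> \<alpha> E \<le> 1"
    and coh: "coherent \<alpha>" and K: "K_alpha ar \<alpha> D"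
    and aS: "a \<in> S" and S: "S \<subseteq> fst D" and epos: "0 < dl \<alpha> D S"
    and emin: "\<forall>X \<subseteq> fst D. a \<in> X \<longrightarrow> dl \<alpha> D S \<le> dl \<alpha> D X"
  shows "\<exists>D'. K_alpha ar \<alpha> D' \<and> substr D D' \<and> (\<exists>Z \<subseteq> fst D'. S \<subseteq> Z \<and> fst D' - fst D \<subseteq> Z \<and> dl \<alpha> D' Z = 0)"
proof -
  define \<epsilon> where "\<epsilon> = dl \<alpha> D S"
  have KL: "in_KL ar D" and nn: "\<And>X. X \<subseteq> fst D \<Longrightarrow> dl \<alpha> D X \<ge> 0" using K unfolding K_alpha_iff by auto
  have fD: "finite (fst D)" using KL unfolding in_KL_def by simp
  have edD: "\<And>E s. s \<in> snd D E \<Longrightarrow> s \<subseteq> fst D \<and> card s = ar E" using KL unfolding in_KL_def by auto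
  have aD: "a \<in> fst D" using aS S by auto
  have eps1: "\<epsilon> \<le> 1"
  proof -
    have e: "{s \<in> snd D E. s \<subseteq> {a}} = {}" for E
    proof (rule ccontr)
      assume "{s \<in> snd D E. s \<subseteq> {a}} \<noteq> {}"
      then obtain s where s: "s \<in> snd D E" "s \<subseteq> {a}" by auto
      have "card s \<le> card {a}" using s(2) by (intro card_mono) auto
      moreover have "card s = ar E" "2 \<le> ar E" using edD[OF s(1)] ar2 by auto
      ultimately show False by simp
    qed
    have "dl \<alpha> D {a} = 1" unfolding dl_def e by simp
    moreover have "dl \<alpha> D S \<le> dl \<alpha> D {a}" using emin aD by blast
    ultimately show ?thesis unfolding \<epsilon>_def by simp
  qed
  have epos': "0 < \<epsilon>" using epos by (simp add: \<epsilon>_def)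
  obtain m :: "'l \<Rightarrow> nat" where m: "\<forall>E. m E > 0" and qQ: "(\<Sum>E\<in>UNIV. real (m E) * \<alpha> E) \<in> \<rat>"
    using coh unfolding coherent_def by blast
  define q where "q = (\<Sum>E\<in>UNIV. real (m E) * \<alpha> E)"
  obtain a' b' :: int where b': "b' > 0" and qab: "q = of_int a' / of_int b'"
    using qQ unfolding q_def[symmetric] by (elim Rats_cases')
  have qpos: "q > 0" unfolding q_def using m apos by (intro sum_pos) auto
  have a'pos: "a' > 0"
  proof -
    have "real_of_int a' / real_of_int b' > 0" using qpos qab by simp
    then show ?thesis using b' by (simp add: zero_less_divide_iff)
  qed
  define n where "n E = card {s \<in> snd D E. s \<subseteq> S}" for E
  define R where "R = (\<Sum>E\<in>UNIV. nat \<lceil>1 / \<alpha> E\<rceil>)"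
  have Rb: "\<forall>E. 1 \<le> real R * \<alpha> E"
  proof
    fix E
    have "nat \<lceil>1 / \<alpha> E\<rceil> \<le> R" unfolding R_def by (rule member_le_sum) auto
    then have "1 / \<alpha> E \<le> real R" by linarith
    moreover have "0 \<le> \<alpha> E" using apos by (simp add: less_imp_le)
    ultimately have "1 / \<alpha> E * \<alpha> E \<le> real R * \<alpha> E" by (rule mult_right_mono)
    moreover have "\<alpha> E \<noteq> 0" using apos[rule_format, of E] by simp
    ultimately show "1 \<le> real R * \<alpha> E" by simp
  qed
  define A0 where "A0 = (\<Sum>E\<in>UNIV. ar E)"
  have arA: "\<forall>E. 2 \<le> ar E \<and> ar E \<le> A0" using ar2 unfolding A0_def by (auto intro: member_le_sum)
  define T where "T = card S + (\<Sum>E\<in>UNIV. n E) + 2 * (R + A0 + 1) + 1"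
  define t where "t = nat b' * T"
  define c where "c E = t * m E - n E" for E
  define N where "N = nat a' * T - card S"
  have nT: "n E \<le> T" for E unfolding T_def using member_le_sum[of E UNIV n] by simp
  have Tt: "T \<le> t * m E" for E
  proof -
    have "1 \<le> nat b'" "1 \<le> m E" using b' m by (auto simp: Suc_le_eq)
    then have "1 * T * 1 \<le> nat b' * T * m E" by (intro mult_mono) auto
    then show ?thesis unfolding t_def by simp
  qed
  have cE: "real (c E) = real t * real (m E) - real (n E)" for E
    unfolding c_def using nT[of E] Tt[of E] by (simp add: of_nat_diff)
  have ST: "card S \<le> nat a' * T"
  proof -
    have "1 \<le> nat a'" using a'pos by simp
    then have "1 * T \<le> nat a' * T" by (intro mult_right_mono) auto
    then show ?thesis unfolding T_def by simp
  qed
  have tq: "real t * q = real_of_int a' * real T"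
    unfolding t_def qab using b' by (simp add: field_simps)
  have tot: "(\<Sum>E\<in>UNIV. \<alpha> E * real (c E)) = real N + \<epsilon>"
  proof -
    have "(\<Sum>E\<in>UNIV. \<alpha> E * real (c E)) = real t * q - (\<Sum>E\<in>UNIV. \<alpha> E * real (n E))"
      unfolding cE q_def by (simp add: sum_subtractf sum_distrib_left algebra_simps)
    also have "\<dots> = real_of_int a' * real T - (\<Sum>E\<in>UNIV. \<alpha> E * real (n E))" using tq by simp
    also have "\<dots> = real N + \<epsilon>"
      unfolding N_def \<epsilon>_def dl_def n_def using ST a'pos by (simp add: of_nat_diff)
    finally show ?thesis .
  qed
  have big: "2 * (R + A0 + 1) < N + 1"
  proof -
    have "1 \<le> nat a'" using a'pos by simp
    then have "1 * T \<le> nat a' * T" by (intro mult_right_mono) auto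
    then have "T \<le> nat a' * T" by simp
    then show ?thesis unfolding N_def T_def by linarith
  qed
  obtain G :: "'l \<Rightarrow> nat set set" where Gc: "\<forall>E. card (G E) = c E"
    and Gp: "\<forall>E. \<forall>g\<in>G E. g \<subseteq> {0..N} \<and> card g = ar E \<and> (\<exists>i\<in>g. i \<noteq> 0)"
    and Gl: "\<forall>Z \<subseteq> {0..N}. (\<Sum>E\<in>UNIV. \<alpha> E * real (card {g \<in> G E. g \<subseteq> Z})) \<le> real (card (Z - {0})) + (if 0 \<in> Z then \<epsilon> else 0)"
    using gadget[OF apos arA epos' eps1 Rb tot big] by blast
  define base where "base = Suc (Max (insert 0 (fst D)))"
  define \<phi> where "\<phi> i = (if i = 0 then a else base + i)" for i :: nat
  have phiD: "\<phi> i \<notin> fst D" if "i \<noteq> 0" for i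
  proof
    assume "\<phi> i \<in> fst D"
    then have "\<phi> i \<le> Max (insert 0 (fst D))" using fD by (intro Max_ge) auto
    then show False using that unfolding \<phi>_def base_def by simp
  qed
  have phi0: "\<phi> 0 = a" unfolding \<phi>_def by simp
  have injphi: "inj_on \<phi> {0..N}"
  proof (rule inj_onI)
    fix i j assume "i \<in> {0..N}" "j \<in> {0..N}" "\<phi> i = \<phi> j"
    then show "i = j" using phiD[of i] phiD[of j] aD unfolding \<phi>_def by (auto split: if_splits)
  qed
  define Y where "Y = \<phi> ` {1..N}"
  have YD: "Y \<inter> fst D = {}" unfolding Y_def using phiD by auto
  define D' where "D' = (fst D \<union> Y, \<lambda>E. snd D E \<union> (image \<phi>) ` G E)"
  have fstD': "fst D' = fst D \<union> Y" and sndD': "\<And>E. snd D' E = snd D E \<union> (image \<phi>) ` G E"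
    unfolding D'_def by auto
  have Gsub: "\<And>E g. g \<in> G E \<Longrightarrow> g \<subseteq> {0..N}" using Gp by simp
  have phig_sub: "\<phi> ` g \<subseteq> fst D \<union> Y" if "g \<subseteq> {0..N}" for g
  proof
    fix x assume "x \<in> \<phi> ` g"
    then obtain i where i: "i \<in> g" "x = \<phi> i" by auto
    show "x \<in> fst D \<union> Y"
    proof (cases "i = 0")
      case True then show ?thesis using i aD phi0 by simp
    next
      case False then have "i \<in> {1..N}" using i that by auto
      then show ?thesis using i unfolding Y_def by auto
    qed
  qed
  have phig_notD: "\<not> \<phi> ` g \<subseteq> fst D" if "g \<in> G E" for g E
  proof -
    have "\<exists>i\<in>g. i \<noteq> 0" using Gp that by simp
    then obtain i where "i \<in> g" "i \<noteq> 0" by (elim bexE)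
    then show ?thesis using phiD by auto
  qed
  have injP: "inj_on (image \<phi>) (Pow {0..N})" by (rule inj_on_image_Pow[OF injphi])
  have injG: "inj_on (image \<phi>) (G E)" for E by (rule inj_on_subset[OF injP]) (use Gsub in auto)
  have decomp: "dl \<alpha> D' X = dl \<alpha> D (X \<inter> fst D) + real (card ({i\<in>{0..N}. \<phi> i \<in> X} - {0}))
      - (\<Sum>E\<in>UNIV. \<alpha> E * real (card {g \<in> G E. g \<subseteq> {i\<in>{0..N}. \<phi> i \<in> X}}))"
    if X: "X \<subseteq> fst D'" for X
  proof -
    define Z where "Z = {i\<in>{0..N}. \<phi> i \<in> X}"
    define X1 where "X1 = X \<inter> fst D"
    have fY: "finite Y" unfolding Y_def by simp
    have c1: "card X = card X1 + card (Z - {0})"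
    proof -
      have "X = X1 \<union> (X - fst D)" unfolding X1_def by auto
      moreover have "X - fst D = \<phi> ` (Z - {0})"
      proof
        show "X - fst D \<subseteq> \<phi> ` (Z - {0})"
        proof
          fix x assume x: "x \<in> X - fst D"
          then have "x \<in> Y" using X fstD' by auto
          then obtain i where "i \<in> {1..N}" "x = \<phi> i" unfolding Y_def by auto
          then show "x \<in> \<phi> ` (Z - {0})" using x unfolding Z_def by auto
        qed
        show "\<phi> ` (Z - {0}) \<subseteq> X - fst D"
        proof
          fix x assume "x \<in> \<phi> ` (Z - {0})"
          then obtain i where i: "i \<in> Z" "i \<noteq> 0" "x = \<phi> i" by blast
          have "\<phi> i \<in> X" using i(1) unfolding Z_def by simp
          moreover have "\<phi> i \<notin> fst D" using phiD[OF i(2)] .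
          ultimately show "x \<in> X - fst D" using i(3) by simp
        qed
      qed
      moreover have "card (\<phi> ` (Z - {0})) = card (Z - {0})"
        by (rule card_image, rule inj_on_subset[OF injphi]) (auto simp: Z_def)
      moreover have "finite X1" unfolding X1_def using fD by simp
      moreover have "finite (X - fst D)" using X fstD' fY by (auto intro: finite_subset)
      moreover have "X1 \<inter> (X - fst D) = {}" unfolding X1_def by auto
      ultimately show ?thesis using card_Un_disjoint[of X1 "X - fst D"] by simp
    qed
    have c2: "card {s \<in> snd D' E. s \<subseteq> X} = card {s \<in> snd D E. s \<subseteq> X1} + card {g \<in> G E. g \<subseteq> Z}" for E
    proof -
      have eq: "{s \<in> snd D' E. s \<subseteq> X} = {s \<in> snd D E. s \<subseteq> X1} \<union> (image \<phi>) ` {g \<in> G E. g \<subseteq> Z}"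
      proof
        show "{s \<in> snd D' E. s \<subseteq> X} \<subseteq> {s \<in> snd D E. s \<subseteq> X1} \<union> (image \<phi>) ` {g \<in> G E. g \<subseteq> Z}"
        proof
          fix s assume s: "s \<in> {s \<in> snd D' E. s \<subseteq> X}"
          show "s \<in> {s \<in> snd D E. s \<subseteq> X1} \<union> (image \<phi>) ` {g \<in> G E. g \<subseteq> Z}"
          proof (cases "s \<in> snd D E")
            case True then show ?thesis using s edD[OF True] unfolding X1_def by auto
          next
            case False
            then obtain g where g: "g \<in> G E" "s = \<phi> ` g" using s sndD' by auto
            then have "g \<subseteq> Z" using s Gsub[OF g(1)] unfolding Z_def by auto
            then show ?thesis using g by auto
          qed
        qed
        show "{s \<in> snd D E. s \<subseteq> X1} \<union> (image \<phi>) ` {g \<in> G E. g \<subseteq> Z} \<subseteq> {s \<in> snd D' E. s \<subseteq> X}"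
          unfolding X1_def Z_def sndD' by auto
      qed
      have disj: "{s \<in> snd D E. s \<subseteq> X1} \<inter> (image \<phi>) ` {g \<in> G E. g \<subseteq> Z} = {}"
        using phig_notD edD by blast
      have fin1: "finite {s \<in> snd D E. s \<subseteq> X1}"
      proof -
        have "snd D E \<subseteq> Pow (fst D)" using edD by auto
        then show ?thesis using fD by (auto intro: finite_subset)
      qed
      have fin2: "finite {g \<in> G E. g \<subseteq> Z}"
      proof -
        have "G E \<subseteq> Pow {0..N}" using Gsub by auto
        then show ?thesis by (auto intro: finite_subset)
      qed
      have "card ((image \<phi>) ` {g \<in> G E. g \<subseteq> Z}) = card {g \<in> G E. g \<subseteq> Z}"
        by (rule card_image, rule inj_on_subset[OF injG]) auto
      then show ?thesis unfolding eq using card_Un_disjoint[OF fin1 _ disj] fin2 by simp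
    qed
    show ?thesis
      unfolding dl_def c1 c2 Z_def[symmetric] X1_def[symmetric]
      by (simp add: distrib_left sum.distrib algebra_simps)
  qed
  have KL': "in_KL ar D'"
    unfolding in_KL_def
  proof (intro conjI allI subsetI)
    show "finite (fst D')" unfolding fstD' Y_def using fD by simp
    fix E s assume s: "s \<in> snd D' E"
    show "s \<in> {S. S \<subseteq> fst D' \<and> card S = ar E}"
    proof (cases "s \<in> snd D E")
      case True then show ?thesis using edD[OF True] fstD' by auto
    next
      case False
      then obtain g where g: "g \<in> G E" "s = \<phi> ` g" using s sndD' by auto
      have "card s = card g" unfolding g(2)
        by (rule card_image, rule inj_on_subset[OF injphi Gsub[OF g(1)]])
      then show ?thesis using g phig_sub[OF Gsub[OF g(1)]] Gp fstD' by auto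
    qed
  qed
  have nn': "dl \<alpha> D' X \<ge> 0" if X: "X \<subseteq> fst D'" for X
  proof -
    define Z where "Z = {i\<in>{0..N}. \<phi> i \<in> X}"
    have Z: "Z \<subseteq> {0..N}" unfolding Z_def by auto
    have ld: "(\<Sum>E\<in>UNIV. \<alpha> E * real (card {g \<in> G E. g \<subseteq> Z})) \<le> real (card (Z - {0})) + (if 0 \<in> Z then \<epsilon> else 0)"
      using Gl Z by blast
    have "dl \<alpha> D (X \<inter> fst D) \<ge> (if 0 \<in> Z then \<epsilon> else 0)"
    proof (cases "0 \<in> Z")
      case True
      then have "a \<in> X \<inter> fst D" using phi0 aD unfolding Z_def by auto
      then show ?thesis using emin True unfolding \<epsilon>_def by auto
    next
      case False then show ?thesis using nn[of "X \<inter> fst D"] by simp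
    qed
    then show ?thesis using decomp[OF X] ld unfolding Z_def by linarith
  qed
  have K': "K_alpha ar \<alpha> D'" unfolding K_alpha_iff using KL' nn' by blast
  have sub: "substr D D'"
    unfolding substr_def
  proof (intro conjI allI)
    show "fst D \<subseteq> fst D'" unfolding fstD' by auto
    fix E show "snd D E = {s \<in> snd D' E. s \<subseteq> fst D}"
      unfolding sndD' using edD phig_notD by blast
  qed
  define Z0 where "Z0 = S \<union> Y"
  have Z0sub: "Z0 \<subseteq> fst D'" unfolding Z0_def fstD' using S by auto
  have Zall: "{i\<in>{0..N}. \<phi> i \<in> Z0} = {0..N}"
  proof -
    have "\<phi> i \<in> Z0" if "i \<in> {0..N}" for i
    proof (cases "i = 0")
      case True then show ?thesis using phi0 aS unfolding Z0_def by simp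
    next
      case False then show ?thesis using that unfolding Z0_def Y_def by auto
    qed
    then show ?thesis by auto
  qed
  have Z0D: "Z0 \<inter> fst D = S" unfolding Z0_def using YD S by auto
  have GZ: "{g \<in> G E. g \<subseteq> {0..N}} = G E" for E using Gsub by auto
  have cN: "card ({0..N::nat} - {0}) = N" by simp
  have "dl \<alpha> D' Z0 = \<epsilon> + real N - (\<Sum>E\<in>UNIV. \<alpha> E * real (c E))"
    using decomp[OF Z0sub] unfolding Zall Z0D GZ cN using Gc \<epsilon>_def by simp
  then have "dl \<alpha> D' Z0 = 0" using tot by simp
  moreover have "fst D' - fst D \<subseteq> Z0" unfolding fstD' Z0_def by auto
  moreover have "S \<subseteq> Z0" unfolding Z0_def by auto
  ultimately show ?thesis using K' sub Z0sub by blast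
qed



definition Ppos :: "('l::finite \<Rightarrow> real) \<Rightarrow> ('a, 'l) struc \<Rightarrow> 'a set" where
  "Ppos \<alpha> D = {v \<in> fst D. \<forall>X \<subseteq> fst D. v \<in> X \<longrightarrow> dl \<alpha> D X > 0}"

lemma main:
  fixes ar :: "'l::finite \<Rightarrow> nat" and \<alpha> :: "'l \<Rightarrow> real" and D :: "(nat, 'l) struc"
  assumes ar2: "\<forall>E. ar E \<ge> 2" and apos: "\<forall>E. 0 < \<alpha> E \<and> \<alpha> E \<le> 1" and coh: "coherent \<alpha>"
  shows "K_alpha ar \<alpha> D \<Longrightarrow> \<exists>D'. K_alpha ar \<alpha> D' \<and> substr D D' \<and> delta \<alpha> D' = 0"
proof (induction "card (Ppos \<alpha> D)" arbitrary: D rule: less_induct)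
  case (less D)
  have K: "K_alpha ar \<alpha> D" by fact
  have KL: "in_KL ar D" and nn: "\<And>X. X \<subseteq> fst D \<Longrightarrow> dl \<alpha> D X \<ge> 0" using K unfolding K_alpha_iff by auto
  have fD: "finite (fst D)" using KL unfolding in_KL_def by simp
  have a0: "\<forall>E. 0 \<le> \<alpha> E" using apos by (simp add: less_imp_le)
  have ar1: "\<forall>E. 1 \<le> ar E" using ar2 by (metis le_trans one_le_numeral)
  show ?case
  proof (cases "Ppos \<alpha> D = {}")
    case True
    have cov: "\<forall>v\<in>fst D. \<exists>X \<subseteq> fst D. v \<in> X \<and> dl \<alpha> D X = 0"
    proof
      fix v assume v: "v \<in> fst D"
      then have "v \<notin> Ppos \<alpha> D" using True by simp
      then obtain X where X: "X \<subseteq> fst D" "v \<in> X" "\<not> dl \<alpha> D X > 0" using v unfolding Ppos_def by auto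
      then have "dl \<alpha> D X = 0" using nn[OF X(1)] by simp
      then show "\<exists>X \<subseteq> fst D. v \<in> X \<and> dl \<alpha> D X = 0" using X by blast
    qed
    have "dl \<alpha> D (fst D) = 0" by (rule zero_cover[OF K a0 ar1 cov])
    then have "delta \<alpha> D = 0" using delta_dl[OF KL] by simp
    then show ?thesis using K substr_refl[OF KL] by blast
  next
    case False
    then obtain a where a: "a \<in> Ppos \<alpha> D" by blast
    have aD: "a \<in> fst D" using a unfolding Ppos_def by simp
    define F where "F = {X. X \<subseteq> fst D \<and> a \<in> X}"
    have fF: "finite F" unfolding F_def using fD by simp
    have neF: "F \<noteq> {}" unfolding F_def using aD by blast
    define mn where "mn = Min (dl \<alpha> D ` F)"
    have "mn \<in> dl \<alpha> D ` F" unfolding mn_def using fF neF by (intro Min_in) auto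
    then obtain S where S: "S \<in> F" "dl \<alpha> D S = mn" by auto
    have Smin: "\<forall>X \<subseteq> fst D. a \<in> X \<longrightarrow> dl \<alpha> D S \<le> dl \<alpha> D X"
    proof (intro allI impI)
      fix X assume "X \<subseteq> fst D" "a \<in> X"
      then have "X \<in> F" unfolding F_def by simp
      then show "dl \<alpha> D S \<le> dl \<alpha> D X" unfolding S(2) mn_def using fF by (intro Min_le) auto
    qed
    have SD: "S \<subseteq> fst D" "a \<in> S" using S(1) unfolding F_def by auto
    have epos: "0 < dl \<alpha> D S" using a SD unfolding Ppos_def by auto
    obtain D1 Z where D1: "K_alpha ar \<alpha> D1" "substr D D1" and Z: "Z \<subseteq> fst D1" "S \<subseteq> Z"
      "fst D1 - fst D \<subseteq> Z" "dl \<alpha> D1 Z = 0"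
      using step[OF ar2 apos coh K SD(2) SD(1) epos Smin] by blast
    have sub: "Ppos \<alpha> D1 \<subseteq> Ppos \<alpha> D - {a}"
    proof
      fix v assume v: "v \<in> Ppos \<alpha> D1"
      then have v1: "v \<in> fst D1" and vp: "\<And>X. X \<subseteq> fst D1 \<Longrightarrow> v \<in> X \<Longrightarrow> dl \<alpha> D1 X > 0"
        unfolding Ppos_def by auto
      have "v \<notin> Z" using vp[OF Z(1)] Z(4) by auto
      then have vD: "v \<in> fst D" "v \<noteq> a" using v1 Z(3) Z(2) SD(2) by auto
      have fsub: "fst D \<subseteq> fst D1" using D1(2) unfolding substr_def by simp
      have "dl \<alpha> D X > 0" if "X \<subseteq> fst D" "v \<in> X" for X
        using vp[of X] that fsub dl_sub[OF D1(2) that(1)] by auto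
      then show "v \<in> Ppos \<alpha> D - {a}" using vD unfolding Ppos_def by auto
    qed
    have fP: "finite (Ppos \<alpha> D)" unfolding Ppos_def using fD by simp
    have "card (Ppos \<alpha> D1) < card (Ppos \<alpha> D)"
    proof -
      have "Ppos \<alpha> D1 \<subset> Ppos \<alpha> D" using sub a by blast
      then show ?thesis using fP by (rule psubset_card_mono[rotated])
    qed
    then obtain D2 where "K_alpha ar \<alpha> D2" "substr D1 D2" "delta \<alpha> D2 = 0"
      using less.hyps D1(1) by blast
    then show ?thesis using substr_trans[OF D1(2)] by blast
  qed
qed

theorem theorem3p39:
  fixes ar :: "'l::finite \<Rightarrow> nat" and \<alpha> :: "'l \<Rightarrow> real"
    and A :: "(nat, 'l) struc"
  assumes "\<forall>E. ar E \<ge> 2"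
    and "\<forall>E. 0 < \<alpha> E \<and> \<alpha> E \<le> 1"
    and "\<not> (\<forall>E. ar E = 2 \<and> \<alpha> E = 1)"
    and "coherent \<alpha>"
    and "K_alpha ar \<alpha> A"
    and "delta \<alpha> A > 0"
  shows "\<exists>D :: (nat, 'l) struc. K_alpha ar \<alpha> D \<and> substr A D \<and> delta \<alpha> D = 0"
  using main[OF assms(1,2,4) assms(5)] .

end
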